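(* Let $h:\Gamma\to\mathbb{T}A$ be a connected parametrized tropical curve without contracted edges, $\mathcal{Q}=\{p_1,\dots,p_x\}$ a lifting set, and $\tilde h:\widetilde\Gamma\to N_\mathbb{R}$ the lifted planar tropical curve, with paired unbounded ends $e_i,f_i$ of outgoing slopes $n_i,-n_i$ coming from $p_i$ and with $\gamma_i\in\Lambda$ the class of the loop associated to the pair $(e_i,f_i)$ (projection of a path in $\widetilde\Gamma$ from $e_i$ to $f_i$). Then every small deformation of $h$ (in the same combinatorial type) lifts to a small deformation of $\tilde h$. Conversely, a small deformation of $\tilde h$ (same combinatorial type, same slopes) descends to a deformation of $h:\Gamma\to\mathbb{T}A$ if and only if for every $i=1,\dots,x$ it satisfies $$\det(n_i,e_i)+\det(-n_i,f_i)=\det(n_i,S\gamma_i),$$ where $\det(n,e)$ denotes the moment $\det(n,z)$, $z\in\tilde h(e)$, of an unbounded end $e$ of slope $n$.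
   Context: $N$ is an oriented rank $2$ lattice, $N_\mathbb{R}=N\otimes\mathbb{R}$. A tropical torus is $\mathbb{T}A=N_\mathbb{R}/\Lambda$ with injective $S:\Lambda\to N_\mathbb{R}$ whose image is a full-rank lattice. A parametrized tropical curve $h:\Gamma\to\mathbb{T}A$ is a map from a compact connected finite metric graph, affine on edges with slopes in $N$, balanced at each vertex; an edge is contracted if its slope is $0$. A finite set $\mathcal{Q}$ of points in the interiors of edges of $\Gamma$ is lifting if $h_*:\pi_1(\Gamma\setminus\mathcal{Q})\to\pi_1(\mathbb{T}A)=\Lambda$ is trivial; the lift $\tilde h:\widetilde\Gamma\to N_\mathbb{R}$ is obtained by lifting $h|_{\Gamma\setminus\mathcal{Q}}$ to $N_\mathbb{R}$ and prolonging each cut half-edge to an unbounded ray of the same slope. A deformation is a continuous family of parametrized tropical curves of the same combinatorial type (same graph, same slopes, varying edge lengths and position). *)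

theory Defs
  imports "HOL-Analysis.Analysis"
begin

text \<open>Vectors of N_R = R^2 (N = Z^2 with its standard orientation).\<close>
type_synonym vec = "real \<times> real"

definition det2 :: "vec \<Rightarrow> vec \<Rightarrow> real" where
  "det2 a b = fst a * snd b - snd a * fst b"

definition rvec :: "int \<times> int \<Rightarrow> vec" where
  "rvec n = (real_of_int (fst n), real_of_int (snd n))"

text \<open>Lambda = Z^2; S given by the images u, v of the two basis vectors.
  S is injective with full-rank image iff det2 u v is nonzero.\<close>
definition Smap :: "vec \<Rightarrow> vec \<Rightarrow> int \<times> int \<Rightarrow> vec" where
  "Smap u v g = real_of_int (fst g) *\<^sub>R u + real_of_int (snd g) *\<^sub>R v"

definition lattice :: "vec \<Rightarrow> vec \<Rightarrow> vec set" where
  "lattice u v = range (Smap u v)"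

text \<open>Oriented walks in the graph with edge set F: a list of (edge, forward?) pairs.\<close>
fun walk :: "('e \<Rightarrow> 'v) \<Rightarrow> ('e \<Rightarrow> 'v) \<Rightarrow> 'e set \<Rightarrow> 'v \<Rightarrow> ('e \<times> bool) list \<Rightarrow> 'v \<Rightarrow> bool" where
  "walk s t F a [] b = (a = b)"
| "walk s t F a ((e, d) # w) b =
     (e \<in> F \<and> (if d then s e = a \<and> walk s t F (t e) w b
                    else t e = a \<and> walk s t F (s e) w b))"

text \<open>Displacement in N_R of the lift of (the image under h of) a walk.\<close>
definition walk_disp :: "('e \<Rightarrow> real) \<Rightarrow> ('e \<Rightarrow> int \<times> int) \<Rightarrow> ('e \<times> bool) list \<Rightarrow> vec" where
  "walk_disp len \<sigma> w = (\<Sum>(e, d) \<leftarrow> w. (if d then len e else - len e) *\<^sub>R rvec (\<sigma> e))"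

definition trop_type :: "'v set \<Rightarrow> 'e set \<Rightarrow> ('e \<Rightarrow> 'v) \<Rightarrow> ('e \<Rightarrow> 'v) \<Rightarrow> ('e \<Rightarrow> int \<times> int) \<Rightarrow> bool" where
  "trop_type V E s t \<sigma> \<longleftrightarrow> finite V \<and> finite E \<and> V \<noteq> {} \<and>
     (\<forall>e\<in>E. s e \<in> V \<and> t e \<in> V) \<and>
     (\<forall>v\<in>V. (\<Sum>e\<in>E. (if s e = v then \<sigma> e else 0) + (if t e = v then - \<sigma> e else 0)) = 0)"

definition connected_graph :: "'v set \<Rightarrow> 'e set \<Rightarrow> ('e \<Rightarrow> 'v) \<Rightarrow> ('e \<Rightarrow> 'v) \<Rightarrow> bool" where
  "connected_graph V E s t \<longleftrightarrow> (\<forall>a\<in>V. \<forall>b\<in>V. \<exists>w. walk s t E a w b)"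

definition no_contracted_edges :: "'e set \<Rightarrow> ('e \<Rightarrow> int \<times> int) \<Rightarrow> bool" where
  "no_contracted_edges E \<sigma> \<longleftrightarrow> (\<forall>e\<in>E. \<sigma> e \<noteq> 0)"

text \<open>A parametrized tropical curve h : Gamma -> TA of the given type: edge lengths and
  images of the vertices (represented by points of N_R; a point is only relevant mod S Lambda).
  The edge e is the affine map t |-> pos (src e) + t * sigma e, t in [0, length e], mod S Lambda.\<close>
definition torus_curve :: "vec \<Rightarrow> vec \<Rightarrow> 'v set \<Rightarrow> 'e set \<Rightarrow> ('e \<Rightarrow> 'v) \<Rightarrow> ('e \<Rightarrow> 'v) \<Rightarrow>
    ('e \<Rightarrow> int \<times> int) \<Rightarrow> ('e \<Rightarrow> real) \<Rightarrow> ('v \<Rightarrow> vec) \<Rightarrow> bool" where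
  "torus_curve u v V E s t \<sigma> len pos \<longleftrightarrow>
     (\<forall>e\<in>E. len e > 0 \<and> pos (t e) - pos (s e) - len e *\<^sub>R rvec (\<sigma> e) \<in> lattice u v)"

text \<open>Edges of Gamma containing a point of the lifting set Q = {p_i : i < x};
  p_i lies on edge qe i at distance qt i from src (qe i).\<close>
definition cut_edges :: "nat \<Rightarrow> (nat \<Rightarrow> 'e) \<Rightarrow> 'e set" where
  "cut_edges x qe = qe ` {..<x}"

text \<open>Lifting set: h_* : pi_1(Gamma \ Q) -> Lambda trivial, i.e. every closed walk in the
  graph with the cut edges removed has lifted displacement 0.\<close>
definition lifting_set :: "'v set \<Rightarrow> 'e set \<Rightarrow> ('e \<Rightarrow> 'v) \<Rightarrow> ('e \<Rightarrow> 'v) \<Rightarrow> ('e \<Rightarrow> int \<times> int) \<Rightarrow>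
    ('e \<Rightarrow> real) \<Rightarrow> nat \<Rightarrow> (nat \<Rightarrow> 'e) \<Rightarrow> (nat \<Rightarrow> real) \<Rightarrow> bool" where
  "lifting_set V E s t \<sigma> len x qe qt \<longleftrightarrow>
     inj_on qe {..<x} \<and> cut_edges x qe \<subseteq> E \<and>
     (\<forall>i<x. 0 < qt i \<and> qt i < len (qe i)) \<and>
     (\<forall>a\<in>V. \<forall>w. walk s t (E - cut_edges x qe) a w a \<longrightarrow> walk_disp len \<sigma> w = 0)"

text \<open>Planar tropical curve of the lifted type: bounded edges F (with lengths), vertices V at
  positions P; the unbounded ends are the rays e_i = P (src (qe i)) + R_{>=0} n_i and
  f_i = P (tgt (qe i)) + R_{>=0} (- n_i), with n_i = sigma (qe i).\<close>
definition planar_curve :: "'v set \<Rightarrow> 'e set \<Rightarrow> ('e \<Rightarrow> 'v) \<Rightarrow> ('e \<Rightarrow> 'v) \<Rightarrow>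
    ('e \<Rightarrow> int \<times> int) \<Rightarrow> ('e \<Rightarrow> real) \<Rightarrow> ('v \<Rightarrow> vec) \<Rightarrow> bool" where
  "planar_curve V F s t \<sigma> len P \<longleftrightarrow>
     (\<forall>e\<in>F. len e > 0 \<and> P (t e) = P (s e) + len e *\<^sub>R rvec (\<sigma> e))"

definition is_lift :: "vec \<Rightarrow> vec \<Rightarrow> 'v set \<Rightarrow> 'e set \<Rightarrow> ('e \<Rightarrow> 'v) \<Rightarrow> ('e \<Rightarrow> 'v) \<Rightarrow>
    ('e \<Rightarrow> int \<times> int) \<Rightarrow> 'e set \<Rightarrow> ('e \<Rightarrow> real) \<Rightarrow> ('v \<Rightarrow> vec) \<Rightarrow>
    ('e \<Rightarrow> real) \<Rightarrow> ('v \<Rightarrow> vec) \<Rightarrow> bool" where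
  "is_lift u v V E s t \<sigma> C len pos lent P \<longleftrightarrow>
     planar_curve V (E - C) s t \<sigma> lent P \<and>
     (\<forall>e\<in>E - C. lent e = len e) \<and> (\<forall>w\<in>V. P w - pos w \<in> lattice u v)"

text \<open>gamma_i: class in Lambda of the loop obtained by projecting a path in the lifted graph
  from the end e_i to the end f_i (convention: S gamma_i = z_{e_i} - z_{f_i}, where
  z_{e_i}, z_{f_i} are the two lifts of p_i).\<close>
definition loop_class :: "vec \<Rightarrow> vec \<Rightarrow> 'e set \<Rightarrow> ('e \<Rightarrow> 'v) \<Rightarrow> ('e \<Rightarrow> 'v) \<Rightarrow> ('e \<Rightarrow> int \<times> int) \<Rightarrow>
    ('e \<Rightarrow> real) \<Rightarrow> nat \<Rightarrow> (nat \<Rightarrow> 'e) \<Rightarrow> nat \<Rightarrow> int \<times> int \<Rightarrow> bool" where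
  "loop_class u v E s t \<sigma> len x qe i g \<longleftrightarrow>
     (\<exists>w. walk s t (E - cut_edges x qe) (s (qe i)) w (t (qe i)) \<and>
          Smap u v g = len (qe i) *\<^sub>R rvec (\<sigma> (qe i)) - walk_disp len \<sigma> w)"

definition torus_deformation :: "vec \<Rightarrow> vec \<Rightarrow> 'v set \<Rightarrow> 'e set \<Rightarrow> ('e \<Rightarrow> 'v) \<Rightarrow> ('e \<Rightarrow> 'v) \<Rightarrow>
    ('e \<Rightarrow> int \<times> int) \<Rightarrow> ('e \<Rightarrow> real) \<Rightarrow> ('v \<Rightarrow> vec) \<Rightarrow>
    (real \<Rightarrow> 'e \<Rightarrow> real) \<Rightarrow> (real \<Rightarrow> 'v \<Rightarrow> vec) \<Rightarrow> bool" where
  "torus_deformation u v V E s t \<sigma> len pos L Pos \<longleftrightarrow>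
     (\<forall>e\<in>E. continuous_on {0..1} (\<lambda>r. L r e) \<and> L 0 e = len e) \<and>
     (\<forall>w\<in>V. continuous_on {0..1} (\<lambda>r. Pos r w) \<and> Pos 0 w = pos w) \<and>
     (\<forall>r\<in>{0..1}. torus_curve u v V E s t \<sigma> (L r) (Pos r))"

definition planar_deformation :: "'v set \<Rightarrow> 'e set \<Rightarrow> ('e \<Rightarrow> 'v) \<Rightarrow> ('e \<Rightarrow> 'v) \<Rightarrow>
    ('e \<Rightarrow> int \<times> int) \<Rightarrow> ('e \<Rightarrow> real) \<Rightarrow> ('v \<Rightarrow> vec) \<Rightarrow>
    (real \<Rightarrow> 'e \<Rightarrow> real) \<Rightarrow> (real \<Rightarrow> 'v \<Rightarrow> vec) \<Rightarrow> bool" where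
  "planar_deformation V F s t \<sigma> len P L Q \<longleftrightarrow>
     (\<forall>e\<in>F. continuous_on {0..1} (\<lambda>r. L r e) \<and> L 0 e = len e) \<and>
     (\<forall>w\<in>V. continuous_on {0..1} (\<lambda>r. Q r w) \<and> Q 0 w = P w) \<and>
     (\<forall>r\<in>{0..1}. planar_curve V F s t \<sigma> (L r) (Q r))"

definition deform_within :: "'v set \<Rightarrow> 'e set \<Rightarrow> real \<Rightarrow> ('e \<Rightarrow> real) \<Rightarrow> ('v \<Rightarrow> vec) \<Rightarrow>
    (real \<Rightarrow> 'e \<Rightarrow> real) \<Rightarrow> (real \<Rightarrow> 'v \<Rightarrow> vec) \<Rightarrow> bool" where
  "deform_within V F eps len P L Q \<longleftrightarrow>
     (\<forall>r\<in>{0..1}. (\<forall>e\<in>F. \<bar>L r e - len e\<bar> < eps) \<and> (\<forall>w\<in>V. norm (Q r w - P w) < eps))"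

end

theory Submission
  imports Defs
begin

lemma int_valued_const:
  fixes g :: "real \<Rightarrow> real"
  assumes "continuous_on {0..1} g" "\<forall>r\<in>{0..1}. g r \<in> \<int>" "r \<in> {0..1}"
  shows "g r = g 0"
proof -
  have "g constant_on {0..1}"
  proof (rule continuous_discrete_range_constant)
    show "connected {0..1::real}" by simp
    show "continuous_on {0..1} g" by fact
    fix y assume y: "y \<in> {0..1::real}"
    show "\<exists>e>0. \<forall>z. z \<in> {0..1} \<and> g z \<noteq> g y \<longrightarrow> e \<le> norm (g z - g y)"
    proof (intro exI[of _ 1] conjI allI impI)
      fix z assume z: "z \<in> {0..1} \<and> g z \<noteq> g y"
      then obtain a b where "g z = of_int a" "g y = of_int b" using y assms(2) by (metis Ints_cases)
      with z show "1 \<le> norm (g z - g y)" by auto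
    qed simp
  qed
  then show ?thesis using assms(3) unfolding constant_on_def by force
qed

lemma lattice_const:
  assumes S: "det2 u v \<noteq> 0" and c: "continuous_on {0..1} f"
    and L: "\<forall>r\<in>{0..1::real}. f r \<in> lattice u v" and r: "r \<in> {0..1}"
  shows "f r = f 0"
proof -
  define c1 where "c1 z = det2 z v / det2 u v" for z
  define c2 where "c2 z = det2 u z / det2 u v" for z
  have k1: "c1 (Smap u v g) = of_int (fst g)" for g
    using S unfolding c1_def Smap_def det2_def by (simp add: field_simps)
  have k2: "c2 (Smap u v g) = of_int (snd g)" for g
    using S unfolding c2_def Smap_def det2_def by (simp add: field_simps)
  have cc1: "continuous_on {0..1} (\<lambda>r. c1 (f r))" unfolding c1_def det2_def
    using S by (auto intro!: continuous_intros c simp: det2_def)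
  have cc2: "continuous_on {0..1} (\<lambda>r. c2 (f r))" unfolding c2_def det2_def
    using S by (auto intro!: continuous_intros c simp: det2_def)
  have i1: "\<forall>r\<in>{0..1}. c1 (f r) \<in> \<int>" using L k1 unfolding lattice_def by auto
  have i2: "\<forall>r\<in>{0..1}. c2 (f r) \<in> \<int>" using L k2 unfolding lattice_def by auto
  have e1: "c1 (f r) = c1 (f 0)" by (rule int_valued_const[OF cc1 i1 r])
  have e2: "c2 (f r) = c2 (f 0)" by (rule int_valued_const[OF cc2 i2 r])
  obtain g where g: "f r = Smap u v g" using L r unfolding lattice_def by blast
  obtain g0 where g0: "f 0 = Smap u v g0" using L unfolding lattice_def by (meson atLeastAtMost_iff imageE zero_le_one order_refl)
  have "g = g0" using e1 e2 k1 k2 g g0 by (simp add: prod_eq_iff)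
  then show ?thesis using g g0 by simp
qed

lemma walk_disp_planar:
  assumes "\<forall>e\<in>F. P (t e) = P (s e) + len e *\<^sub>R rvec (\<sigma> e)"
  shows "walk s t F a w b \<Longrightarrow> P b - P a = walk_disp len \<sigma> w"
  using assms
proof (induction w arbitrary: a)
  case Nil then show ?case by (simp add: walk_disp_def)
next
  case (Cons p w)
  obtain e d where p: "p = (e, d)" by (cases p)
  show ?case
  proof (cases d)
    case True
    with Cons p have "e \<in> F" "s e = a" "walk s t F (t e) w b" by auto
    with Cons.IH[of "t e"] Cons.prems show ?thesis using p True
      by (auto simp: walk_disp_def algebra_simps)
  next
    case False
    with Cons p have "e \<in> F" "t e = a" "walk s t F (s e) w b" by auto
    with Cons.IH[of "s e"] Cons.prems show ?thesis using p False
      by (auto simp: walk_disp_def algebra_simps)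
  qed
qed

lemma parallel_vec:
  fixes a b c d :: real
  assumes "a * d - b * c = 0" "a^2 + b^2 \<noteq> 0"
  shows "c = (a*c + b*d)/(a^2+b^2) * a \<and> d = (a*c + b*d)/(a^2+b^2) * b"
  using assms by (auto simp: field_simps power2_eq_square)

lemma sq_ge_abs: fixes a :: int shows "\<bar>real_of_int a\<bar> \<le> real_of_int a * real_of_int a"
proof -
  have "\<bar>a\<bar> \<le> a*a"
  proof (cases "a = 0")
    case False
    then have "1 \<le> \<bar>a\<bar>" by linarith
    then have "\<bar>a\<bar> * 1 \<le> \<bar>a\<bar> * \<bar>a\<bar>" by (intro mult_left_mono) auto
    then show ?thesis by (simp add: abs_mult_self_eq)
  qed simp
  then have "real_of_int \<bar>a\<bar> \<le> real_of_int (a*a)" by (simp only: of_int_le_iff)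
  then show ?thesis by simp
qed

lemma mul_bound: fixes a c e :: real assumes "\<bar>c\<bar> < e" shows "a*c \<ge> - (\<bar>a\<bar>*e)" "a \<noteq> 0 \<Longrightarrow> a*c > - (\<bar>a\<bar>*e)"
proof -
  have "\<bar>a*c\<bar> \<le> \<bar>a\<bar>*e" unfolding abs_mult using assms by (intro mult_left_mono) auto
  then show "a*c \<ge> - (\<bar>a\<bar>*e)" by linarith
  assume "a \<noteq> 0"
  then have "\<bar>a*c\<bar> < \<bar>a\<bar>*e" unfolding abs_mult using assms by (intro mult_strict_left_mono) auto
  then show "a*c > - (\<bar>a\<bar>*e)" by linarith
qed

lemma pos_bound:
  fixes a b :: int and l e c1 c2 :: real
  assumes "a \<noteq> 0 \<or> b \<noteq> 0" "0 < e" "2*e \<le> l" "\<bar>c1\<bar> < 2*e" "\<bar>c2\<bar> < 2*e"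
  shows "0 < a*(l*a + c1) + b*(l*b+c2)"
proof -
  have sa: "\<bar>real_of_int a\<bar> \<le> real_of_int a*real_of_int a" by (rule sq_ge_abs)
  have sb: "\<bar>real_of_int b\<bar> \<le> real_of_int b*real_of_int b" by (rule sq_ge_abs)
  have h3: "a*c1 + b*c2 > - ((\<bar>real_of_int a\<bar> + \<bar>real_of_int b\<bar>) * (2*e))"
  proof (cases "a = 0")
    case True
    then have "b \<noteq> 0" using assms(1) by simp
    then have "b*c2 > - (\<bar>real_of_int b\<bar> * (2*e))" using mul_bound(2)[OF assms(5)] by simp
    with True show ?thesis by simp
  next
    case False
    then have "a*c1 > - (\<bar>real_of_int a\<bar> * (2*e))" using mul_bound(2)[OF assms(4)] by simp
    with mul_bound(1)[OF assms(5), of b] show ?thesis by (simp add: algebra_simps)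
  qed
  have "(\<bar>real_of_int a\<bar> + \<bar>real_of_int b\<bar>) * (2*e) \<le> (\<bar>real_of_int a\<bar> + \<bar>real_of_int b\<bar>) * l"
    using assms(3) by (intro mult_left_mono) auto
  also have "\<dots> \<le> (a*a + b*b) * l" using sa sb assms by (intro mult_right_mono) auto
  finally show ?thesis using h3 by (simp add: algebra_simps)
qed

lemma abs_fst_le: fixes z :: vec shows "\<bar>fst z\<bar> \<le> norm z" "\<bar>snd z\<bar> \<le> norm z"
  using norm_fst_le[of "fst z" "snd z"] norm_snd_le[of "snd z" "fst z"] by simp_all

lemma two_bound: fixes p q :: real assumes "\<bar>p\<bar> < e" "\<bar>q\<bar> < e" shows "\<bar>p - q\<bar> < 2*e"
  using assms by linarith

lemma eq3: fixes a b c d :: "'a::ab_group_add" shows "a - b - c = d \<Longrightarrow> c = a - b - d"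
  by (simp add: algebra_simps)

lemma eq4: fixes a b c :: "'a::ab_group_add" shows "a - b = c \<Longrightarrow> a = b + c"
  by (simp add: algebra_simps)

lemma det_cond:
  "(det2 n a + det2 (-n) b = det2 n g) \<longleftrightarrow> det2 n (b - a + g) = 0"
  by (auto simp: det2_def algebra_simps)

lemma det_self: "det2 n (c *\<^sub>R n) = 0"
  by (simp add: det2_def)

lemma lattice_diff: "a \<in> lattice u v \<Longrightarrow> b \<in> lattice u v \<Longrightarrow> a - b \<in> lattice u v"
proof -
  assume "a \<in> lattice u v" "b \<in> lattice u v"
  then obtain g k where "a = Smap u v g" "b = Smap u v k" unfolding lattice_def by blast
  then have "a - b = Smap u v (g - k)" by (simp add: Smap_def algebra_simps)
  then show ?thesis unfolding lattice_def by blast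
qed

theorem mainTheorem4:
  fixes u v :: vec
    and V :: "'v set" and E :: "'e set" and s t :: "'e \<Rightarrow> 'v"
    and \<sigma> :: "'e \<Rightarrow> int \<times> int"
    and len :: "'e \<Rightarrow> real" and pos :: "'v \<Rightarrow> vec"
    and x :: nat and qe :: "nat \<Rightarrow> 'e" and qt :: "nat \<Rightarrow> real"
    and \<gamma> :: "nat \<Rightarrow> int \<times> int"
    and P :: "'v \<Rightarrow> vec"
  assumes S: "det2 u v \<noteq> 0"
    and ty: "trop_type V E s t \<sigma>"
    and conn: "connected_graph V E s t"
    and nc: "no_contracted_edges E \<sigma>"
    and h: "torus_curve u v V E s t \<sigma> len pos"
    and Q: "lifting_set V E s t \<sigma> len x qe qt"
    and lift: "is_lift u v V E s t \<sigma> (cut_edges x qe) len pos len P"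
    and gam: "\<forall>i<x. loop_class u v E s t \<sigma> len x qe i (\<gamma> i)"
  shows
    "(\<forall>eps>0. \<exists>dlt>0. \<forall>L Pos.
        torus_deformation u v V E s t \<sigma> len pos L Pos \<and> deform_within V E dlt len pos L Pos \<longrightarrow>
        (\<exists>Lt Pt. planar_deformation V (E - cut_edges x qe) s t \<sigma> len P Lt Pt \<and>
                 deform_within V (E - cut_edges x qe) eps len P Lt Pt \<and>
                 (\<forall>r\<in>{0..1}. is_lift u v V E s t \<sigma> (cut_edges x qe) (L r) (Pos r) (Lt r) (Pt r))))
     \<and>
     (\<exists>eps>0. \<forall>Lt Pt.
        planar_deformation V (E - cut_edges x qe) s t \<sigma> len P Lt Pt \<and>
        deform_within V (E - cut_edges x qe) eps len P Lt Pt \<longrightarrow>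
        ((\<exists>L Pos. torus_deformation u v V E s t \<sigma> len pos L Pos \<and>
                  (\<forall>r\<in>{0..1}. is_lift u v V E s t \<sigma> (cut_edges x qe) (L r) (Pos r) (Lt r) (Pt r)))
         \<longleftrightarrow>
         (\<forall>r\<in>{0..1}. \<forall>i<x.
            det2 (rvec (\<sigma> (qe i))) (Pt r (s (qe i))) + det2 (- rvec (\<sigma> (qe i))) (Pt r (t (qe i)))
            = det2 (rvec (\<sigma> (qe i))) (Smap u v (\<gamma> i)))))"
proof -
  define C where "C = cut_edges x qe"
  have CE: "C \<subseteq> E" using Q unfolding lifting_set_def C_def by blast
  have Cfin: "finite C" unfolding C_def cut_edges_def by simp
  have VE: "\<And>e. e \<in> E \<Longrightarrow> s e \<in> V \<and> t e \<in> V" using ty unfolding trop_type_def by blast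
  have hE: "\<And>e. e \<in> E \<Longrightarrow> len e > 0 \<and> pos (t e) - pos (s e) - len e *\<^sub>R rvec (\<sigma> e) \<in> lattice u v"
    using h unfolding torus_curve_def by blast
  have Pe: "\<And>e. e \<in> E - C \<Longrightarrow> P (t e) = P (s e) + len e *\<^sub>R rvec (\<sigma> e)"
    using lift unfolding is_lift_def planar_curve_def C_def by blast
  have Pw: "\<And>w. w \<in> V \<Longrightarrow> P w - pos w \<in> lattice u v"
    using lift unfolding is_lift_def by blast
  have ncE: "\<And>e. e \<in> E \<Longrightarrow> \<sigma> e \<noteq> 0" using nc unfolding no_contracted_edges_def by blast
  define D where "D e = len e *\<^sub>R rvec (\<sigma> e) - (P (t e) - P (s e))" for e
  have Dg: "D (qe i) = Smap u v (\<gamma> i)" if i: "i < x" for i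
  proof -
    obtain w where w: "walk s t (E - C) (s (qe i)) w (t (qe i))"
      and g: "Smap u v (\<gamma> i) = len (qe i) *\<^sub>R rvec (\<sigma> (qe i)) - walk_disp len \<sigma> w"
      using gam i unfolding loop_class_def C_def by blast
    have "P (t (qe i)) - P (s (qe i)) = walk_disp len \<sigma> w"
      by (rule walk_disp_planar[OF _ w]) (use Pe in blast)
    then show ?thesis using g unfolding D_def by simp
  qed
  have part1: "\<forall>eps>0. \<exists>dlt>0. \<forall>L Pos.
        torus_deformation u v V E s t \<sigma> len pos L Pos \<and> deform_within V E dlt len pos L Pos \<longrightarrow>
        (\<exists>Lt Pt. planar_deformation V (E - C) s t \<sigma> len P Lt Pt \<and>
                 deform_within V (E - C) eps len P Lt Pt \<and>
                 (\<forall>r\<in>{0..1}. is_lift u v V E s t \<sigma> C (L r) (Pos r) (Lt r) (Pt r)))"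
  proof (intro allI impI)
    fix eps :: real assume eps: "eps > 0"
    show "\<exists>dlt>0. \<forall>L Pos.
        torus_deformation u v V E s t \<sigma> len pos L Pos \<and> deform_within V E dlt len pos L Pos \<longrightarrow>
        (\<exists>Lt Pt. planar_deformation V (E - C) s t \<sigma> len P Lt Pt \<and>
                 deform_within V (E - C) eps len P Lt Pt \<and>
                 (\<forall>r\<in>{0..1}. is_lift u v V E s t \<sigma> C (L r) (Pos r) (Lt r) (Pt r)))"
    proof (intro exI[of _ eps] conjI eps allI impI)
      fix L Pos assume a: "torus_deformation u v V E s t \<sigma> len pos L Pos \<and> deform_within V E eps len pos L Pos"
      define Pt where "Pt r w = P w + (Pos r w - pos w)" for r w
      have Lc: "\<And>e. e \<in> E \<Longrightarrow> continuous_on {0..1} (\<lambda>r. L r e) \<and> L 0 e = len e"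
        and Posc: "\<And>w. w \<in> V \<Longrightarrow> continuous_on {0..1} (\<lambda>r. Pos r w) \<and> Pos 0 w = pos w"
        and tc: "\<And>r. r \<in> {0..1} \<Longrightarrow> torus_curve u v V E s t \<sigma> (L r) (Pos r)"
        using a unfolding torus_deformation_def by blast+
      have pc: "planar_curve V (E - C) s t \<sigma> (L r) (Pt r)" if r: "r \<in> {0..1}" for r
        unfolding planar_curve_def
      proof
        fix e assume e: "e \<in> E - C"
        have eE: "e \<in> E" using e by blast
        define f where "f r = Pos r (t e) - Pos r (s e) - L r e *\<^sub>R rvec (\<sigma> e)" for r
        have fc: "continuous_on {0..1} f" unfolding f_def
          using Lc[OF eE] Posc VE[OF eE] by (intro continuous_intros) auto
        have fl: "\<forall>r\<in>{0..1}. f r \<in> lattice u v"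
          using tc eE unfolding f_def torus_curve_def by blast
        have "f r = f 0" by (rule lattice_const[OF S fc fl r])
        then have "Pos r (t e) - Pos r (s e) - L r e *\<^sub>R rvec (\<sigma> e) = pos (t e) - pos (s e) - len e *\<^sub>R rvec (\<sigma> e)"
          unfolding f_def using Lc[OF eE] Posc VE[OF eE] by simp
        then have "Pt r (t e) = Pt r (s e) + L r e *\<^sub>R rvec (\<sigma> e)"
          unfolding Pt_def using Pe[OF e] by (simp add: algebra_simps)
        moreover have "L r e > 0" using tc[OF r] eE unfolding torus_curve_def by blast
        ultimately show "0 < L r e \<and> Pt r (t e) = Pt r (s e) + L r e *\<^sub>R rvec (\<sigma> e)" by blast
      qed
      show "\<exists>Lt Pt. planar_deformation V (E - C) s t \<sigma> len P Lt Pt \<and>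
                 deform_within V (E - C) eps len P Lt Pt \<and>
                 (\<forall>r\<in>{0..1}. is_lift u v V E s t \<sigma> C (L r) (Pos r) (Lt r) (Pt r))"
      proof (intro exI[of _ L] exI[of _ Pt] conjI)
        show "planar_deformation V (E - C) s t \<sigma> len P L Pt"
          unfolding planar_deformation_def using Lc Posc pc unfolding Pt_def
          by (auto intro!: continuous_intros)
        show "deform_within V (E - C) eps len P L Pt"
          using a unfolding deform_within_def Pt_def by auto
        show "\<forall>r\<in>{0..1}. is_lift u v V E s t \<sigma> C (L r) (Pos r) (L r) (Pt r)"
          unfolding is_lift_def using pc Pw unfolding Pt_def by (auto simp: algebra_simps)
      qed
    qed
  qed
  define eps where "eps = Min (insert 1 ((\<lambda>e. len e / 2) ` C))"
  have fin: "finite (insert 1 ((\<lambda>e. len e / 2) ` C))" using Cfin by simp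
  have allp: "\<forall>y \<in> insert 1 ((\<lambda>e. len e / 2) ` C). y > 0"
  proof
    fix y assume "y \<in> insert 1 ((\<lambda>e. len e / 2) ` C)"
    then consider "y = 1" | e where "e \<in> C" "y = len e / 2" by blast
    then show "y > 0"
    proof cases
      case 2
      then have "e \<in> E" using CE by blast
      with hE 2 show ?thesis by force
    qed simp
  qed
  have epsp: "eps > 0" unfolding eps_def using fin allp by (simp add: Min_gr_iff)
  have epsle: "2 * eps \<le> len e" if "e \<in> C" for e
  proof -
    have "eps \<le> len e / 2" unfolding eps_def using fin that by (intro Min_le) auto
    then show ?thesis by simp
  qed
  have part2: "\<forall>Lt Pt.
        planar_deformation V (E - C) s t \<sigma> len P Lt Pt \<and>
        deform_within V (E - C) eps len P Lt Pt \<longrightarrow>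
        ((\<exists>L Pos. torus_deformation u v V E s t \<sigma> len pos L Pos \<and>
                  (\<forall>r\<in>{0..1}. is_lift u v V E s t \<sigma> C (L r) (Pos r) (Lt r) (Pt r)))
         \<longleftrightarrow>
         (\<forall>r\<in>{0..1}. \<forall>i<x.
            det2 (rvec (\<sigma> (qe i))) (Pt r (s (qe i))) + det2 (- rvec (\<sigma> (qe i))) (Pt r (t (qe i)))
            = det2 (rvec (\<sigma> (qe i))) (Smap u v (\<gamma> i))))"
  proof (intro allI impI)
    fix Lt Pt assume a: "planar_deformation V (E - C) s t \<sigma> len P Lt Pt \<and>
        deform_within V (E - C) eps len P Lt Pt"
    have Ltc: "\<And>e. e \<in> E - C \<Longrightarrow> continuous_on {0..1} (\<lambda>r. Lt r e) \<and> Lt 0 e = len e"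
      and Ptc: "\<And>w. w \<in> V \<Longrightarrow> continuous_on {0..1} (\<lambda>r. Pt r w) \<and> Pt 0 w = P w"
      and pc: "\<And>r. r \<in> {0..1} \<Longrightarrow> planar_curve V (E - C) s t \<sigma> (Lt r) (Pt r)"
      and near: "\<And>r w. r \<in> {0..1} \<Longrightarrow> w \<in> V \<Longrightarrow> norm (Pt r w - P w) < eps"
      using a unfolding planar_deformation_def deform_within_def by blast+
    have eqv: "(det2 (rvec (\<sigma> (qe i))) (Pt r (s (qe i))) + det2 (- rvec (\<sigma> (qe i))) (Pt r (t (qe i)))
            = det2 (rvec (\<sigma> (qe i))) (Smap u v (\<gamma> i))) \<longleftrightarrow>
          det2 (rvec (\<sigma> (qe i))) (Pt r (t (qe i)) - Pt r (s (qe i)) + D (qe i)) = 0" if "i < x" for r i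
      using Dg[OF that] det_cond by simp
    show "(\<exists>L Pos. torus_deformation u v V E s t \<sigma> len pos L Pos \<and>
                  (\<forall>r\<in>{0..1}. is_lift u v V E s t \<sigma> C (L r) (Pos r) (Lt r) (Pt r)))
         \<longleftrightarrow>
         (\<forall>r\<in>{0..1}. \<forall>i<x.
            det2 (rvec (\<sigma> (qe i))) (Pt r (s (qe i))) + det2 (- rvec (\<sigma> (qe i))) (Pt r (t (qe i)))
            = det2 (rvec (\<sigma> (qe i))) (Smap u v (\<gamma> i)))"
    proof
      assume "\<exists>L Pos. torus_deformation u v V E s t \<sigma> len pos L Pos \<and>
                  (\<forall>r\<in>{0..1}. is_lift u v V E s t \<sigma> C (L r) (Pos r) (Lt r) (Pt r))"
      then obtain L Pos where td: "torus_deformation u v V E s t \<sigma> len pos L Pos"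
        and il: "\<forall>r\<in>{0..1}. is_lift u v V E s t \<sigma> C (L r) (Pos r) (Lt r) (Pt r)" by blast
      have Lc: "\<And>e. e \<in> E \<Longrightarrow> continuous_on {0..1} (\<lambda>r. L r e) \<and> L 0 e = len e"
        and Posc: "\<And>w. w \<in> V \<Longrightarrow> continuous_on {0..1} (\<lambda>r. Pos r w) \<and> Pos 0 w = pos w"
        and tc: "\<And>r. r \<in> {0..1} \<Longrightarrow> torus_curve u v V E s t \<sigma> (L r) (Pos r)"
        using td unfolding torus_deformation_def by blast+
      have PP: "Pt r w - Pos r w = P w - pos w" if r: "r \<in> {0..1}" and w: "w \<in> V" for r w
      proof -
        have fc: "continuous_on {0..1} (\<lambda>r. Pt r w - Pos r w)"
          using Ptc[OF w] Posc[OF w] by (intro continuous_intros) auto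
        have fl: "\<forall>r\<in>{0..1}. Pt r w - Pos r w \<in> lattice u v"
          using il w unfolding is_lift_def by blast
        show ?thesis using lattice_const[OF S fc fl r] Ptc[OF w] Posc[OF w] by simp
      qed
      show "\<forall>r\<in>{0..1}. \<forall>i<x.
            det2 (rvec (\<sigma> (qe i))) (Pt r (s (qe i))) + det2 (- rvec (\<sigma> (qe i))) (Pt r (t (qe i)))
            = det2 (rvec (\<sigma> (qe i))) (Smap u v (\<gamma> i))"
      proof (intro ballI allI impI)
        fix r :: real and i assume r: "r \<in> {0..1}" and i: "i < x"
        define e where "e = qe i"
        have eE: "e \<in> E" using CE i unfolding C_def cut_edges_def e_def by blast
        define f where "f r = Pos r (t e) - Pos r (s e) - L r e *\<^sub>R rvec (\<sigma> e)" for r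
        have fc: "continuous_on {0..1} f" unfolding f_def
          using Lc[OF eE] Posc VE[OF eE] by (intro continuous_intros) auto
        have fl: "\<forall>r\<in>{0..1}. f r \<in> lattice u v"
          using tc eE unfolding f_def torus_curve_def by blast
        have "f r = f 0" by (rule lattice_const[OF S fc fl r])
        then have 1: "Pos r (t e) - Pos r (s e) - L r e *\<^sub>R rvec (\<sigma> e) = pos (t e) - pos (s e) - len e *\<^sub>R rvec (\<sigma> e)"
          unfolding f_def using Lc[OF eE] Posc VE[OF eE] by simp
        have 2: "Pt r (t e) = Pos r (t e) + (P (t e) - pos (t e))" "Pt r (s e) = Pos r (s e) + (P (s e) - pos (s e))"
          using eq4[OF PP[OF r, of "t e"]] eq4[OF PP[OF r, of "s e"]] VE[OF eE] by auto
        have "Pt r (t e) - Pt r (s e) + D e = L r e *\<^sub>R rvec (\<sigma> e)"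
          unfolding eq3[OF 1] 2 D_def by (simp add: algebra_simps)
        then have "det2 (rvec (\<sigma> e)) (Pt r (t e) - Pt r (s e) + D e) = 0" by (simp add: det_self)
        then show "det2 (rvec (\<sigma> (qe i))) (Pt r (s (qe i))) + det2 (- rvec (\<sigma> (qe i))) (Pt r (t (qe i)))
            = det2 (rvec (\<sigma> (qe i))) (Smap u v (\<gamma> i))" using eqv[OF i] unfolding e_def by simp
      qed
    next
      assume dc: "\<forall>r\<in>{0..1}. \<forall>i<x.
            det2 (rvec (\<sigma> (qe i))) (Pt r (s (qe i))) + det2 (- rvec (\<sigma> (qe i))) (Pt r (t (qe i)))
            = det2 (rvec (\<sigma> (qe i))) (Smap u v (\<gamma> i))"
      have dcC: "det2 (rvec (\<sigma> e)) (Pt r (t e) - Pt r (s e) + D e) = 0" if r: "r \<in> {0..1}" and e: "e \<in> C" for r e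
      proof -
        obtain i where i: "i < x" "e = qe i" using e unfolding C_def cut_edges_def by blast
        show ?thesis using dc r eqv[OF i(1)] i by blast
      qed
      define Y where "Y r e = Pt r (t e) - Pt r (s e) + D e" for r e
      define a where "a e = real_of_int (fst (\<sigma> e))" for e
      define b where "b e = real_of_int (snd (\<sigma> e))" for e
      define L where "L r e = (if e \<in> C then (a e * fst (Y r e) + b e * snd (Y r e)) / ((a e)^2 + (b e)^2) else Lt r e)" for r e
      define Pos where "Pos r w = Pt r w - (P w - pos w)" for r w
      have rv: "rvec (\<sigma> e) = (a e, b e)" for e unfolding rvec_def a_def b_def by simp
      have ab0: "(a e)^2 + (b e)^2 \<noteq> 0" if "e \<in> E" for e
        using ncE[OF that] unfolding a_def b_def by (auto simp: prod_eq_iff)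
      have Y0: "Y 0 e = len e *\<^sub>R rvec (\<sigma> e)" if "e \<in> E" for e
        unfolding Y_def D_def using Ptc VE[OF that] by simp
      have L0: "L 0 e = len e" if "e \<in> E" for e
      proof (cases "e \<in> C")
        case True
        then show ?thesis unfolding L_def using Y0[OF that] ab0[OF that]
          by (simp add: rv field_simps power2_eq_square)
      next
        case False
        then show ?thesis unfolding L_def using Ltc that by simp
      qed
      have Lcont: "continuous_on {0..1} (\<lambda>r. L r e)" if "e \<in> E" for e
      proof (cases "e \<in> C")
        case True
        then show ?thesis unfolding L_def Y_def using Ptc VE[OF that] ab0[OF that]
          by (auto intro!: continuous_intros)
      next
        case False
        then show ?thesis unfolding L_def using Ltc that by simp
      qed
      have tcurve: "torus_curve u v V E s t \<sigma> (L r) (Pos r)" if r: "r \<in> {0..1}" for r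
        unfolding torus_curve_def
      proof
        fix e assume eE: "e \<in> E"
        show "0 < L r e \<and> Pos r (t e) - Pos r (s e) - L r e *\<^sub>R rvec (\<sigma> e) \<in> lattice u v"
        proof (cases "e \<in> C")
          case False
          then have eC: "e \<in> E - C" using eE by blast
          have pe: "0 < Lt r e \<and> Pt r (t e) = Pt r (s e) + Lt r e *\<^sub>R rvec (\<sigma> e)"
            using pc[OF r] eC unfolding planar_curve_def by blast
          have "Pos r (t e) - Pos r (s e) - L r e *\<^sub>R rvec (\<sigma> e) = pos (t e) - pos (s e) - len e *\<^sub>R rvec (\<sigma> e)"
            unfolding Pos_def L_def using False pe Pe[OF eC] by (simp add: algebra_simps)
          then show ?thesis using hE[OF eE] pe False unfolding L_def by simp
        next
          case True
          have det0: "a e * snd (Y r e) - b e * fst (Y r e) = 0"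
            using dcC[OF r True] unfolding Y_def det2_def rv by simp
          have par: "Y r e = L r e *\<^sub>R rvec (\<sigma> e)"
            using parallel_vec[OF det0 ab0[OF eE]] True unfolding L_def rv
            by (simp add: prod_eq_iff)
          have "Pos r (t e) - Pos r (s e) - L r e *\<^sub>R rvec (\<sigma> e) = pos (t e) - pos (s e) - len e *\<^sub>R rvec (\<sigma> e)"
            unfolding par[symmetric] Pos_def Y_def D_def by (simp add: algebra_simps)
          moreover have "0 < L r e"
          proof -
            define c1 where "c1 = fst (Pt r (t e) - P (t e)) - fst (Pt r (s e) - P (s e))"
            define c2 where "c2 = snd (Pt r (t e) - P (t e)) - snd (Pt r (s e) - P (s e))"
            have nt: "norm (Pt r (t e) - P (t e)) < eps" using near r VE[OF eE] by blast
            have ns: "norm (Pt r (s e) - P (s e)) < eps" using near r VE[OF eE] by blast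
            have "\<bar>c1\<bar> < 2*eps" unfolding c1_def
              by (rule two_bound[OF order_le_less_trans[OF abs_fst_le(1) nt] order_le_less_trans[OF abs_fst_le(1) ns]])
            moreover have "\<bar>c2\<bar> < 2*eps" unfolding c2_def
              by (rule two_bound[OF order_le_less_trans[OF abs_fst_le(2) nt] order_le_less_trans[OF abs_fst_le(2) ns]])
            moreover have "fst (\<sigma> e) \<noteq> 0 \<or> snd (\<sigma> e) \<noteq> 0" using ncE[OF eE] by (auto simp: prod_eq_iff)
            ultimately have pb: "0 < real_of_int (fst (\<sigma> e)) * (len e * real_of_int (fst (\<sigma> e)) + c1)
                  + real_of_int (snd (\<sigma> e)) * (len e * real_of_int (snd (\<sigma> e)) + c2)"
              using pos_bound epsp epsle[OF True] by blast
            have "fst (Y r e) = len e * a e + c1" "snd (Y r e) = len e * b e + c2"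
              unfolding Y_def D_def c1_def c2_def rv by simp_all
            then have "0 < a e * fst (Y r e) + b e * snd (Y r e)" using pb unfolding a_def b_def by simp
            moreover have "0 < (a e)^2 + (b e)^2" using ab0[OF eE] by (simp add: sum_power2_gt_zero_iff)
            ultimately show ?thesis unfolding L_def using True by simp
          qed
          ultimately show ?thesis using hE[OF eE] by simp
        qed
      qed
      show "\<exists>L Pos. torus_deformation u v V E s t \<sigma> len pos L Pos \<and>
                  (\<forall>r\<in>{0..1}. is_lift u v V E s t \<sigma> C (L r) (Pos r) (Lt r) (Pt r))"
      proof (intro exI[of _ L] exI[of _ Pos] conjI)
        show "torus_deformation u v V E s t \<sigma> len pos L Pos"
          unfolding torus_deformation_def using Lcont L0 tcurve Ptc unfolding Pos_def
          by (auto intro!: continuous_intros)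
        show "\<forall>r\<in>{0..1}. is_lift u v V E s t \<sigma> C (L r) (Pos r) (Lt r) (Pt r)"
          unfolding is_lift_def using pc Pw unfolding Pos_def L_def by auto
      qed
    qed
  qed
  show ?thesis using part1 part2 epsp unfolding C_def by blast
qed

end
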